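(* Let $s_0, s_f, v_0, v_f \in \mathbb{R}$, and let \[ \mathcal{A} := \Big\{u\in L^2(0,1;\mathbb{R}) \;:\; \exists\, x=(x_1,x_2)\in W^{1,2}(0,1;\mathbb{R}^2) \text{ with } \dot{x}_1(t) = x_2(t),\ \dot{x}_2(t) = u(t) \text{ for a.e. } t\in[0,1],\ x_1(0)=s_0,\ x_1(1)=s_f,\ x_2(0)=v_0,\ x_2(1)=v_f\Big\}. \] Let $u^-\in L^2(0,1;\mathbb{R})$, and let $x=(x_1,x_2)$ be the solution of the initial value problem \[ \dot{x}_1(t) = x_2(t),\quad x_1(0)=s_0,\qquad \dot{x}_2(t) = u^-(t),\quad x_2(0)=v_0,\qquad t\in[0,1]. \] Set \[ c_1 = 12\,(x_1(1)-s_f) - 6\,(x_2(1)-v_f),\qquad c_2 = -6\,(x_1(1)-s_f) + 2\,(x_2(1)-v_f). \] Then the projection $P_{\mathcal{A}}(u^-)$ of $u^-$ onto $\mathcal{A}$, i.e. the solution of the problem \[ \min\ \frac{1}{2}\int_0^1 (u(t)-u^-(t))^2\,dt \quad\text{subject to}\quad u\in\mathcal{A}, \] is given by \[ P_{\mathcal{A}}(u^-)(t) = u^-(t) + c_1\,t + c_2 \qquad\text{for all } t\in[0,1]. \]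
   Context: $L^2(0,1;\mathbb{R}^q)$ denotes the Hilbert space of (equivalence classes of) Lebesgue measurable functions $z:[0,1]\to\mathbb{R}^q$ with $\|z\|_2=\big(\sum_{i=1}^q\int_0^1 |z_i(t)|^2\,dt\big)^{1/2}<\infty$, and $W^{1,2}(0,1;\mathbb{R}^q)$ is the Sobolev space of absolutely continuous functions $z\in L^2(0,1;\mathbb{R}^q)$ with $\dot z\in L^2(0,1;\mathbb{R}^q)$. The projection is taken with respect to the $L^2$ norm. *)

theory Defs
  imports "HOL-Analysis.Analysis"
begin

text \<open>Square integrable real functions on [0,1] (representatives of L^2(0,1;R)).\<close>
definition L2_01 :: "(real \<Rightarrow> real) \<Rightarrow> bool" where
  "L2_01 f \<longleftrightarrow> f \<in> borel_measurable (lebesgue_on {0..1})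
      \<and> integrable (lebesgue_on {0..1}) (\<lambda>t. (f t)\<^sup>2)"

text \<open>Absolute continuity on [0,1]: for every eps > 0 there is delta > 0 such that for every
  finite family of non-overlapping subintervals [a i, b i] of [0,1] (listed in increasing order)
  of total length < delta, the total variation of f over them is < eps.\<close>
definition abs_cont_01 :: "(real \<Rightarrow> real) \<Rightarrow> bool" where
  "abs_cont_01 f \<longleftrightarrow> (\<forall>\<epsilon>>0. \<exists>\<delta>>0. \<forall>(n::nat) (a::nat \<Rightarrow> real) b.
      (\<forall>i<n. 0 \<le> a i \<and> a i \<le> b i \<and> b i \<le> 1) \<and>
      (\<forall>i j. i < j \<and> j < n \<longrightarrow> b i \<le> a j) \<and>
      (\<Sum>i<n. b i - a i) < \<delta>
      \<longrightarrow> (\<Sum>i<n. \<bar>f (b i) - f (a i)\<bar>) < \<epsilon>)"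

text \<open>The Sobolev space W^{1,2}(0,1;R): absolutely continuous L^2 functions whose
  (a.e. existing) derivative lies in L^2.\<close>
definition W12_01 :: "(real \<Rightarrow> real) \<Rightarrow> bool" where
  "W12_01 f \<longleftrightarrow> L2_01 f \<and> abs_cont_01 f \<and>
     (\<exists>g. L2_01 g \<and> (AE t in lebesgue_on {0..1}. (f has_real_derivative g t) (at t)))"

text \<open>The admissible set \<A>.\<close>
definition admissible :: "real \<Rightarrow> real \<Rightarrow> real \<Rightarrow> real \<Rightarrow> (real \<Rightarrow> real) set" where
  "admissible s0 sf v0 vf = {u. L2_01 u \<and> (\<exists>x1 x2. W12_01 x1 \<and> W12_01 x2 \<and>
      (AE t in lebesgue_on {0..1}. (x1 has_real_derivative x2 t) (at t)
                                 \<and> (x2 has_real_derivative u t) (at t)) \<and>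
      x1 0 = s0 \<and> x1 1 = sf \<and> x2 0 = v0 \<and> x2 1 = vf)}"

text \<open>p is the (L^2-)projection of f onto A: p is in A, minimises (1/2)||u - f||^2 over A,
  and every other minimiser coincides with p almost everywhere (i.e. as element of L^2).\<close>
definition is_L2_projection :: "(real \<Rightarrow> real) set \<Rightarrow> (real \<Rightarrow> real) \<Rightarrow> (real \<Rightarrow> real) \<Rightarrow> bool" where
  "is_L2_projection A f p \<longleftrightarrow> p \<in> A \<and>
     (\<forall>u\<in>A. (1/2) * integral\<^sup>L (lebesgue_on {0..1}) (\<lambda>t. (p t - f t)\<^sup>2)
            \<le> (1/2) * integral\<^sup>L (lebesgue_on {0..1}) (\<lambda>t. (u t - f t)\<^sup>2)) \<and>
     (\<forall>u\<in>A. (1/2) * integral\<^sup>L (lebesgue_on {0..1}) (\<lambda>t. (u t - f t)\<^sup>2)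
            \<le> (1/2) * integral\<^sup>L (lebesgue_on {0..1}) (\<lambda>t. (p t - f t)\<^sup>2)
            \<longrightarrow> (AE t in lebesgue_on {0..1}. u t = p t))"

end

theory Submission
  imports Defs
begin

lemma ac_cont:
  assumes "abs_cont_01 f"
  shows "continuous_on {0..1} f"
  unfolding continuous_on_iff
proof (intro ballI allI impI)
  fix x e :: real assume x: "x \<in> {0..1}" and e: "e > 0"
  obtain d where d: "d > 0" and H0: "\<forall>(n::nat) a b.
      (\<forall>i<n. 0 \<le> a i \<and> a i \<le> b i \<and> b i \<le> 1) \<and>
      (\<forall>i j. i < j \<and> j < n \<longrightarrow> b i \<le> a j) \<and>
      (\<Sum>i<n. b i - a i) < d
      \<longrightarrow> (\<Sum>i<n. \<bar>f (b i) - f (a i)\<bar>) < e"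
    using assms[unfolded abs_cont_01_def, rule_format, OF e] by blast
  show "\<exists>d>0. \<forall>x'\<in>{0..1}. dist x' x < d \<longrightarrow> dist (f x') (f x) < e"
  proof (intro exI conjI ballI impI)
    fix y assume y: "y \<in> {0..1}" "dist y x < d"
    have "(\<Sum>i<Suc 0. \<bar>f ((\<lambda>_. max x y) i) - f ((\<lambda>_. min x y) i)\<bar>) < e"
    proof (rule H0[rule_format], intro conjI)
      show "\<forall>i<Suc 0. 0 \<le> min x y \<and> min x y \<le> max x y \<and> max x y \<le> 1"
        using x y by auto
      show "\<forall>i j. i < j \<and> j < Suc 0 \<longrightarrow> max x y \<le> min x y" by auto
      show "(\<Sum>i<Suc 0. max x y - min x y) < d" using y by (auto simp: dist_real_def)
    qed
    then have "\<bar>f (max x y) - f (min x y)\<bar> < e" by simp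
    then show "dist (f y) (f x) < e"
      by (cases "x \<le> y") (auto simp: dist_real_def max_def min_def abs_minus_commute)
  qed (use d in auto)
qed
lemma ac_bounded:
  assumes "abs_cont_01 f"
  obtains B where "B > 0" "\<And>t. t \<in> {0..1} \<Longrightarrow> \<bar>f t\<bar> \<le> B"
proof -
  have "compact (f ` {0..1})"
    using ac_cont[OF assms] compact_continuous_image by blast
  then obtain B where "B > 0" "\<forall>y\<in>f ` {0..1}. norm y \<le> B"
    using compact_imp_bounded bounded_pos by metis
  then show ?thesis using that by auto
qed

lemma ac_set:
  assumes "abs_cont_01 f" "e > 0"
  obtains d where "d > 0" "\<And>(I::'i set) a b. finite I \<Longrightarrow>
      (\<forall>i\<in>I. 0 \<le> a i \<and> a i \<le> b i \<and> b i \<le> 1) \<Longrightarrow>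
      (\<forall>i\<in>I. \<forall>j\<in>I. i \<noteq> j \<and> a i < b i \<and> a j < b j \<longrightarrow> b i \<le> a j \<or> b j \<le> a i) \<Longrightarrow>
      (\<Sum>i\<in>I. b i - a i) < d \<Longrightarrow> (\<Sum>i\<in>I. \<bar>f (b i) - f (a i)\<bar>) < e"
proof -
  obtain d where d: "d > 0" and H0: "\<forall>(n::nat) a b.
      (\<forall>i<n. 0 \<le> a i \<and> a i \<le> b i \<and> b i \<le> 1) \<and>
      (\<forall>i j. i < j \<and> j < n \<longrightarrow> b i \<le> a j) \<and>
      (\<Sum>i<n. b i - a i) < d
      \<longrightarrow> (\<Sum>i<n. \<bar>f (b i) - f (a i)\<bar>) < e"
    using assms(1)[unfolded abs_cont_01_def, rule_format, OF assms(2)] by blast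
  note H = H0[rule_format]
  show ?thesis
  proof (rule that[OF d])
    fix I :: "'i set" and a b
    assume fin: "finite I" and ab: "\<forall>i\<in>I. 0 \<le> a i \<and> a i \<le> b i \<and> b i \<le> 1"
      and no: "\<forall>i\<in>I. \<forall>j\<in>I. i \<noteq> j \<and> a i < b i \<and> a j < b j \<longrightarrow> b i \<le> a j \<or> b j \<le> a i"
      and sm: "(\<Sum>i\<in>I. b i - a i) < d"
    define J where "J = {i\<in>I. a i < b i}"
    have JI: "J \<subseteq> I" and finJ: "finite J" using fin by (auto simp: J_def)
    have s1: "(\<Sum>i\<in>I. b i - a i) = (\<Sum>i\<in>J. b i - a i)"
      by (rule sum.mono_neutral_right[OF fin JI]) (use ab in \<open>auto simp: J_def\<close>)
    have s2: "(\<Sum>i\<in>I. \<bar>f (b i) - f (a i)\<bar>) = (\<Sum>i\<in>J. \<bar>f (b i) - f (a i)\<bar>)"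
    proof (rule sum.mono_neutral_right[OF fin JI], rule ballI)
      fix i assume "i \<in> I - J"
      then have "a i = b i" using ab by (auto simp: J_def)
      then show "\<bar>f (b i) - f (a i)\<bar> = 0" by simp
    qed
    have inj: "inj_on a J"
    proof (rule inj_onI)
      fix i j
      assume ij: "i \<in> J" "j \<in> J" "a i = a j"
      show "i = j"
      proof (rule ccontr)
        assume "i \<noteq> j"
        then have "b i \<le> a j \<or> b j \<le> a i" using no[rule_format, of i j] ij JI by (auto simp: J_def)
        then show False using ij by (auto simp: J_def)
      qed
    qed
    interpret fik: folding_insort_key "(\<le>)" "(<)" J a
      by unfold_locales (rule inj)
    define L where "L = linorder.sorted_key_list_of_set (\<le>) a J"
    have setL: "set L = J" unfolding L_def by (rule fik.set_sorted_key_list_of_set[OF subset_refl finJ])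
    have sortL: "sorted (map a L)" and distL: "distinct (map a L)"
      unfolding L_def by (rule fik.sorted_sorted_key_list_of_set[OF subset_refl], rule fik.distinct_sorted_key_list_of_set[OF subset_refl])
    have distL': "distinct L" using distL by (simp add: distinct_map)
    have bij: "bij_betw ((!) L) {..<length L} J"
      by (rule bij_betw_nth[OF distL' refl setL[symmetric]])
    have lt: "a (L!i) < a (L!j)" if "i < j" "j < length L" for i j
    proof -
      have "map a L ! i \<le> map a L ! j"
        by (rule sorted_nth_mono[OF sortL]) (use that in auto)
      then have "a (L!i) \<le> a (L!j)" using that by simp
      moreover have "a (L!i) \<noteq> a (L!j)"
        using distL that by (simp add: distinct_conv_nth)
      ultimately show ?thesis by simp
    qed
    have memL: "L!i \<in> J" if "i < length L" for i using setL that nth_mem by blast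
    define a' where "a' = (\<lambda>k. a (L!k))"
    define b' where "b' = (\<lambda>k. b (L!k))"
    have P1: "\<forall>i<length L. 0 \<le> a' i \<and> a' i \<le> b' i \<and> b' i \<le> 1"
    proof (intro allI impI)
      fix i assume "i < length L"
      then show "0 \<le> a' i \<and> a' i \<le> b' i \<and> b' i \<le> 1"
        using memL[of i] ab JI by (auto simp: a'_def b'_def)
    qed
    have P2: "\<forall>i j. i < j \<and> j < length L \<longrightarrow> b' i \<le> a' j"
    proof (intro allI impI)
      fix i j assume ij: "i < j \<and> j < length L"
      have "L!i \<noteq> L!j" using distL' ij by (simp add: nth_eq_iff_index_eq)
      moreover have "L!i \<in> J" "L!j \<in> J" using memL ij by auto
      ultimately have "b (L!i) \<le> a (L!j) \<or> b (L!j) \<le> a (L!i)"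
        using no JI by (auto simp: J_def)
      moreover have "a (L!i) < a (L!j)" using lt ij by auto
      moreover have "a (L!j) < b (L!j)" using \<open>L!j \<in> J\<close> by (auto simp: J_def)
      ultimately show "b' i \<le> a' j" by (auto simp: a'_def b'_def)
    qed
    have "(\<Sum>k<length L. b' k - a' k) = (\<Sum>i\<in>J. b i - a i)"
      unfolding a'_def b'_def by (rule sum.reindex_bij_betw[OF bij, of "\<lambda>i. b i - a i"])
    then have P3: "(\<Sum>k<length L. b' k - a' k) < d" using sm s1 by simp
    have "(\<Sum>k<length L. \<bar>f (b' k) - f (a' k)\<bar>) < e"
      by (rule H) (use P1 P2 P3 in blast)
    moreover have "(\<Sum>k<length L. \<bar>f (b' k) - f (a' k)\<bar>) = (\<Sum>i\<in>J. \<bar>f (b i) - f (a i)\<bar>)"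
      unfolding a'_def b'_def by (rule sum.reindex_bij_betw[OF bij, of "\<lambda>i. \<bar>f (b i) - f (a i)\<bar>"])
    ultimately show "(\<Sum>i\<in>I. \<bar>f (b i) - f (a i)\<bar>) < e" using s2 by simp
  qed
qed

lemma ac_D:
  assumes "abs_cont_01 f" "e > 0"
  obtains d where "d > 0" "\<And>(n::nat) a b.
      (\<forall>i<n. 0 \<le> a i \<and> a i \<le> b i \<and> b i \<le> 1) \<Longrightarrow>
      (\<forall>i j. i < j \<and> j < n \<longrightarrow> b i \<le> a j) \<Longrightarrow>
      (\<Sum>i<n. b i - a i) < d
      \<Longrightarrow> (\<Sum>i<n. \<bar>f (b i) - f (a i)\<bar>) < e"
proof -
  obtain d where d: "d > 0" and H0: "\<forall>(n::nat) a b.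
      (\<forall>i<n. 0 \<le> a i \<and> a i \<le> b i \<and> b i \<le> 1) \<and>
      (\<forall>i j. i < j \<and> j < n \<longrightarrow> b i \<le> a j) \<and>
      (\<Sum>i<n. b i - a i) < d
      \<longrightarrow> (\<Sum>i<n. \<bar>f (b i) - f (a i)\<bar>) < e"
    using assms(1)[unfolded abs_cont_01_def, rule_format, OF assms(2)] by blast
  show ?thesis
    by (rule that[OF d]) (use H0 in blast)
qed

lemma ac_I:
  assumes "\<And>e. e > 0 \<Longrightarrow> \<exists>d>0. \<forall>(n::nat) a b.
      (\<forall>i<n. 0 \<le> a i \<and> a i \<le> b i \<and> b i \<le> 1) \<longrightarrow>
      (\<forall>i j. i < j \<and> j < n \<longrightarrow> b i \<le> a j) \<longrightarrow>
      (\<Sum>i<n. b i - a i) < d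
      \<longrightarrow> (\<Sum>i<n. \<bar>f (b i) - f (a i)\<bar>) < e"
  shows "abs_cont_01 f"
  unfolding abs_cont_01_def
proof (intro allI impI)
  fix e :: real assume "e > 0"
  from assms[OF this] obtain d where "d > 0" and H: "\<forall>(n::nat) a b.
      (\<forall>i<n. 0 \<le> a i \<and> a i \<le> b i \<and> b i \<le> 1) \<longrightarrow>
      (\<forall>i j. i < j \<and> j < n \<longrightarrow> b i \<le> a j) \<longrightarrow>
      (\<Sum>i<n. b i - a i) < d
      \<longrightarrow> (\<Sum>i<n. \<bar>f (b i) - f (a i)\<bar>) < e" by blast
  show "\<exists>d>0. \<forall>(n::nat) a b.
      (\<forall>i<n. 0 \<le> a i \<and> a i \<le> b i \<and> b i \<le> 1) \<and>
      (\<forall>i j. i < j \<and> j < n \<longrightarrow> b i \<le> a j) \<and>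
      (\<Sum>i<n. b i - a i) < d
      \<longrightarrow> (\<Sum>i<n. \<bar>f (b i) - f (a i)\<bar>) < e"
    using \<open>d > 0\<close> H by blast
qed

lemma ac_const: "abs_cont_01 (\<lambda>t. c)"
  by (rule ac_I) auto

lemma ac_id: "abs_cont_01 (\<lambda>t. t)"
proof (rule ac_I)
  fix e :: real assume "e > 0"
  show "\<exists>d>0. \<forall>(n::nat) a b.
      (\<forall>i<n. 0 \<le> a i \<and> a i \<le> b i \<and> b i \<le> 1) \<longrightarrow>
      (\<forall>i j. i < j \<and> j < n \<longrightarrow> b i \<le> a j) \<longrightarrow>
      (\<Sum>i<n. b i - a i) < d
      \<longrightarrow> (\<Sum>i<n. \<bar>b i - a i\<bar>) < e"
  proof (intro exI[of _ e] conjI allI impI)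
    fix n :: nat and a b :: "nat \<Rightarrow> real"
    assume "\<forall>i<n. 0 \<le> a i \<and> a i \<le> b i \<and> b i \<le> 1" "(\<Sum>i<n. b i - a i) < e"
    then show "(\<Sum>i<n. \<bar>b i - a i\<bar>) < e" by simp
  qed (use \<open>e > 0\<close> in auto)
qed

lemma ac_add:
  assumes f: "abs_cont_01 f" and g: "abs_cont_01 g"
  shows "abs_cont_01 (\<lambda>t. f t + g t)"
proof (rule ac_I)
  fix e :: real assume e: "e > 0"
  obtain d1 where d1: "d1 > 0" and H1: "\<And>(n::nat) a b.
      (\<forall>i<n. 0 \<le> a i \<and> a i \<le> b i \<and> b i \<le> 1) \<Longrightarrow>
      (\<forall>i j. i < j \<and> j < n \<longrightarrow> b i \<le> a j) \<Longrightarrow>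
      (\<Sum>i<n. b i - a i) < d1 \<Longrightarrow> (\<Sum>i<n. \<bar>f (b i) - f (a i)\<bar>) < e/2"
    by (rule ac_D[OF f, of "e/2"]) (use e in auto)
  obtain d2 where d2: "d2 > 0" and H2: "\<And>(n::nat) a b.
      (\<forall>i<n. 0 \<le> a i \<and> a i \<le> b i \<and> b i \<le> 1) \<Longrightarrow>
      (\<forall>i j. i < j \<and> j < n \<longrightarrow> b i \<le> a j) \<Longrightarrow>
      (\<Sum>i<n. b i - a i) < d2 \<Longrightarrow> (\<Sum>i<n. \<bar>g (b i) - g (a i)\<bar>) < e/2"
    by (rule ac_D[OF g, of "e/2"]) (use e in auto)
  show "\<exists>d>0. \<forall>(n::nat) a b.
      (\<forall>i<n. 0 \<le> a i \<and> a i \<le> b i \<and> b i \<le> 1) \<longrightarrow>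
      (\<forall>i j. i < j \<and> j < n \<longrightarrow> b i \<le> a j) \<longrightarrow>
      (\<Sum>i<n. b i - a i) < d
      \<longrightarrow> (\<Sum>i<n. \<bar>(f (b i) + g (b i)) - (f (a i) + g (a i))\<bar>) < e"
  proof (intro exI[of _ "min d1 d2"] conjI allI impI)
    fix n :: nat and a b :: "nat \<Rightarrow> real"
    assume A: "\<forall>i<n. 0 \<le> a i \<and> a i \<le> b i \<and> b i \<le> 1"
      and B: "\<forall>i j. i < j \<and> j < n \<longrightarrow> b i \<le> a j" and C: "(\<Sum>i<n. b i - a i) < min d1 d2"
    have "(\<Sum>i<n. \<bar>(f (b i) + g (b i)) - (f (a i) + g (a i))\<bar>)
        \<le> (\<Sum>i<n. \<bar>f (b i) - f (a i)\<bar> + \<bar>g (b i) - g (a i)\<bar>)"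
      by (rule sum_mono) linarith
    also have "\<dots> = (\<Sum>i<n. \<bar>f (b i) - f (a i)\<bar>) + (\<Sum>i<n. \<bar>g (b i) - g (a i)\<bar>)"
      by (rule sum.distrib)
    also have "\<dots> < e/2 + e/2"
      using H1[OF A B] H2[OF A B] C by (intro add_strict_mono) auto
    finally show "(\<Sum>i<n. \<bar>(f (b i) + g (b i)) - (f (a i) + g (a i))\<bar>) < e" by simp
  qed (use d1 d2 in auto)
qed

lemma ac_mult:
  assumes f: "abs_cont_01 f" and g: "abs_cont_01 g"
  shows "abs_cont_01 (\<lambda>t. f t * g t)"
proof (rule ac_I)
  fix e :: real assume e: "e > 0"
  obtain A where A0: "A > 0" and A: "\<And>t. t \<in> {0..1} \<Longrightarrow> \<bar>f t\<bar> \<le> A"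
    using ac_bounded[OF f] by blast
  obtain B where B0: "B > 0" and B: "\<And>t. t \<in> {0..1} \<Longrightarrow> \<bar>g t\<bar> \<le> B"
    using ac_bounded[OF g] by blast
  have e1: "e/(2*B) > 0" and e2: "e/(2*A) > 0" using e A0 B0 by auto
  obtain d1 where d1: "d1 > 0" and H1: "\<And>(n::nat) a b.
      (\<forall>i<n. 0 \<le> a i \<and> a i \<le> b i \<and> b i \<le> 1) \<Longrightarrow>
      (\<forall>i j. i < j \<and> j < n \<longrightarrow> b i \<le> a j) \<Longrightarrow>
      (\<Sum>i<n. b i - a i) < d1 \<Longrightarrow> (\<Sum>i<n. \<bar>f (b i) - f (a i)\<bar>) < e/(2*B)"
    by (rule ac_D[OF f e1]) auto
  obtain d2 where d2: "d2 > 0" and H2: "\<And>(n::nat) a b.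
      (\<forall>i<n. 0 \<le> a i \<and> a i \<le> b i \<and> b i \<le> 1) \<Longrightarrow>
      (\<forall>i j. i < j \<and> j < n \<longrightarrow> b i \<le> a j) \<Longrightarrow>
      (\<Sum>i<n. b i - a i) < d2 \<Longrightarrow> (\<Sum>i<n. \<bar>g (b i) - g (a i)\<bar>) < e/(2*A)"
    by (rule ac_D[OF g e2]) auto
  show "\<exists>d>0. \<forall>(n::nat) a b.
      (\<forall>i<n. 0 \<le> a i \<and> a i \<le> b i \<and> b i \<le> 1) \<longrightarrow>
      (\<forall>i j. i < j \<and> j < n \<longrightarrow> b i \<le> a j) \<longrightarrow>
      (\<Sum>i<n. b i - a i) < d
      \<longrightarrow> (\<Sum>i<n. \<bar>f (b i) * g (b i) - f (a i) * g (a i)\<bar>) < e"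
  proof (intro exI[of _ "min d1 d2"] conjI allI impI)
    fix n :: nat and a b :: "nat \<Rightarrow> real"
    assume AA: "\<forall>i<n. 0 \<le> a i \<and> a i \<le> b i \<and> b i \<le> 1"
      and BB: "\<forall>i j. i < j \<and> j < n \<longrightarrow> b i \<le> a j" and C: "(\<Sum>i<n. b i - a i) < min d1 d2"
    have "(\<Sum>i<n. \<bar>f (b i) * g (b i) - f (a i) * g (a i)\<bar>)
        \<le> (\<Sum>i<n. A * \<bar>g (b i) - g (a i)\<bar> + B * \<bar>f (b i) - f (a i)\<bar>)"
    proof (rule sum_mono)
      fix i assume "i \<in> {..<n}"
      then have ai: "a i \<in> {0..1}" and bi: "b i \<in> {0..1}" using AA by auto
      have "\<bar>f (b i) * g (b i) - f (a i) * g (a i)\<bar>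
          = \<bar>f (b i) * (g (b i) - g (a i)) + g (a i) * (f (b i) - f (a i))\<bar>"
        by (simp add: algebra_simps)
      also have "\<dots> \<le> \<bar>f (b i)\<bar> * \<bar>g (b i) - g (a i)\<bar> + \<bar>g (a i)\<bar> * \<bar>f (b i) - f (a i)\<bar>"
        by (simp only: abs_mult[symmetric] abs_triangle_ineq)
      also have "\<dots> \<le> A * \<bar>g (b i) - g (a i)\<bar> + B * \<bar>f (b i) - f (a i)\<bar>"
        using A[OF bi] B[OF ai] by (intro add_mono mult_right_mono) auto
      finally show "\<bar>f (b i) * g (b i) - f (a i) * g (a i)\<bar>
          \<le> A * \<bar>g (b i) - g (a i)\<bar> + B * \<bar>f (b i) - f (a i)\<bar>" .
    qed
    also have "\<dots> = A * (\<Sum>i<n. \<bar>g (b i) - g (a i)\<bar>) + B * (\<Sum>i<n. \<bar>f (b i) - f (a i)\<bar>)"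
      by (simp add: sum.distrib sum_distrib_left)
    also have "\<dots> < A * (e/(2*A)) + B * (e/(2*B))"
      using H1[OF AA BB] H2[OF AA BB] C A0 B0 by (intro add_strict_mono mult_strict_left_mono) auto
    also have "\<dots> = e" using A0 B0 by (simp add: field_simps)
    finally show "(\<Sum>i<n. \<bar>f (b i) * g (b i) - f (a i) * g (a i)\<bar>) < e" .
  qed (use d1 d2 in auto)
qed

lemma ac_diff:
  assumes f: "abs_cont_01 f" and g: "abs_cont_01 g"
  shows "abs_cont_01 (\<lambda>t. f t - g t)"
proof -
  have "abs_cont_01 (\<lambda>t. f t + (\<lambda>t. -1) t * g t)"
    by (intro ac_add ac_mult f g ac_const)
  then show ?thesis by simp
qed

lemma real_interval_nonoverlap:
  fixes c d c' d' :: real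
  assumes "interior K \<inter> interior K' = {}" "K = {c..d}" "K' = {c'..d'}" "c < d" "c' < d'"
  shows "d \<le> c' \<or> d' \<le> c"
proof (rule ccontr)
  assume "\<not> (d \<le> c' \<or> d' \<le> c)"
  then have "max c c' < min d d'" using assms by auto
  then have "(max c c' + min d d')/2 \<in> {c<..<d} \<inter> {c'<..<d'}" by auto
  then show False using assms(1) unfolding assms(2,3) interior_atLeastAtMost_real by blast
qed

lemma real_interval_Int_negligible:
  fixes c d c' d' :: real
  assumes "interior K \<inter> interior K' = {}" "K = {c..d}" "K' = {c'..d'}"
  shows "negligible (K \<inter> K')"
proof (rule negligible_subset[of "{c,d,c',d'}"])
  show "negligible {c,d,c',d'}" by (rule negligible_finite) simp
  show "K \<inter> K' \<subseteq> {c,d,c',d'}"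
  proof
    fix x assume x: "x \<in> K \<inter> K'"
    show "x \<in> {c,d,c',d'}"
    proof (rule ccontr)
      assume "x \<notin> {c,d,c',d'}"
      then have "x \<in> {c<..<d} \<inter> {c'<..<d'}" using x assms(2,3) by auto
      then show False using assms(1) unfolding assms(2,3) interior_atLeastAtMost_real by blast
    qed
  qed
qed

lemma ac_luzin:
  assumes f: "abs_cont_01 f" and N: "N \<subseteq> {0..1}" "negligible N"
  shows "negligible (f ` N)"
  unfolding negligible_outer_le
proof (intro allI impI)
  fix e :: real assume e: "e > 0"
  have fc: "continuous_on {0..1} f" by (rule ac_cont[OF f])
  obtain d where d: "d > 0" and AC: "\<And>(I::real set set) a b. finite I \<Longrightarrow>
      (\<forall>i\<in>I. 0 \<le> a i \<and> a i \<le> b i \<and> b i \<le> 1) \<Longrightarrow>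
      (\<forall>i\<in>I. \<forall>j\<in>I. i \<noteq> j \<and> a i < b i \<and> a j < b j \<longrightarrow> b i \<le> a j \<or> b j \<le> a i) \<Longrightarrow>
      (\<Sum>i\<in>I. b i - a i) < d \<Longrightarrow> (\<Sum>i\<in>I. \<bar>f (b i) - f (a i)\<bar>) < e"
    by (rule ac_set[OF f e], rule that)
  have Nm: "N \<in> lmeasurable" using N(2) by (rule negligible_imp_measurable)
  have N0: "measure lebesgue N = 0" using N(2) by (rule negligible_imp_measure0)
  have d2: "d/2 > 0" using d by simp
  obtain \<D> where cnt: "countable \<D>"
    and DK: "\<And>K. K \<in> \<D> \<Longrightarrow> K \<subseteq> cbox 0 1 \<and> K \<noteq> {} \<and> (\<exists>c d. K = cbox c d)"
    and pw: "pairwise (\<lambda>A B. interior A \<inter> interior B = {}) \<D>"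
    and cov: "N \<subseteq> \<Union>\<D>" and Um: "\<Union>\<D> \<in> lmeasurable"
    and mU: "measure lebesgue (\<Union>\<D>) \<le> measure lebesgue N + d/2"
  proof -
    have N01: "N \<subseteq> cbox 0 1" using N(1) by (simp add: cbox_interval)
    show ?thesis
    proof (rule measurable_outer_intervals_bounded[OF Nm N01 d2])
      fix \<D> assume h1: "countable \<D>"
        and h2: "\<And>K. K \<in> \<D> \<Longrightarrow> K \<subseteq> cbox 0 1 \<and> K \<noteq> {} \<and> (\<exists>c d. K = cbox c d)"
        and h3: "pairwise (\<lambda>A B. interior A \<inter> interior B = {}) \<D>"
        and h4: "N \<subseteq> \<Union>\<D>" and h5: "\<Union>\<D> \<in> lmeasurable"
        and h6: "measure lebesgue (\<Union>\<D>) \<le> measure lebesgue N + d/2"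
      show ?thesis by (rule that[OF h1 h2 h3 h4 h5 h6])
    qed
  qed
  \<comment> \<open>endpoints\<close>
  have "\<forall>K\<in>\<D>. \<exists>p. K = {fst p..snd p} \<and> fst p \<le> snd p \<and> 0 \<le> fst p \<and> snd p \<le> 1"
  proof
    fix K assume K: "K \<in> \<D>"
    then obtain c d where Kcd: "K = cbox c d" using DK by blast
    then have Kcd': "K = {c..d}" by (simp add: cbox_interval)
    have "c \<le> d" using DK[OF K] Kcd' by auto
    moreover have "{c..d} \<subseteq> {0..1}" using DK[OF K] Kcd' by (auto simp: cbox_interval)
    ultimately have "K = {fst (c,d)..snd (c,d)} \<and> fst (c,d) \<le> snd (c,d) \<and> 0 \<le> fst (c,d) \<and> snd (c,d) \<le> 1"
      using Kcd' by auto
    then show "\<exists>p. K = {fst p..snd p} \<and> fst p \<le> snd p \<and> 0 \<le> fst p \<and> snd p \<le> 1" by blast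
  qed
  from bchoice[OF this] obtain P where
    P: "\<forall>K\<in>\<D>. K = {fst (P K)..snd (P K)} \<and> fst (P K) \<le> snd (P K) \<and> 0 \<le> fst (P K) \<and> snd (P K) \<le> 1"
    by blast
  define lo where "lo = (\<lambda>K. fst (P K))"
  define hi where "hi = (\<lambda>K. snd (P K))"
  have eqK: "K = {lo K..hi K}" if "K \<in> \<D>" for K using P that unfolding lo_def hi_def by blast
  have lohi: "(\<forall>x. x \<in> K \<longleftrightarrow> lo K \<le> x \<and> x \<le> hi K) \<and> lo K \<le> hi K \<and> 0 \<le> lo K \<and> hi K \<le> 1"
    if K: "K \<in> \<D>" for K
  proof -
    have "lo K \<le> hi K \<and> 0 \<le> lo K \<and> hi K \<le> 1" using P K unfolding lo_def hi_def by blast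
    moreover have "\<forall>x. x \<in> K \<longleftrightarrow> lo K \<le> x \<and> x \<le> hi K"
    proof
      fix x
      have "x \<in> K \<longleftrightarrow> x \<in> {lo K..hi K}" by (subst eqK[OF K]) (rule refl)
      then show "x \<in> K \<longleftrightarrow> lo K \<le> x \<and> x \<le> hi K" by simp
    qed
    ultimately show ?thesis by blast
  qed
  have "\<forall>K\<in>\<D>. \<exists>p. fst p \<in> K \<and> snd p \<in> K \<and> (\<forall>y\<in>K. f (fst p) \<le> f y \<and> f y \<le> f (snd p))"
  proof
    fix K assume K: "K \<in> \<D>"
    have cK1: "compact K" by (subst eqK[OF K]) simp
    have cK2: "K \<noteq> {}" using lohi[OF K] by auto
    note cK = cK1 cK2
    have fK: "continuous_on K f" using fc by (rule continuous_on_subset) (use lohi[OF K] in auto)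
    obtain v where "v \<in> K" "\<forall>y\<in>K. f y \<le> f v" using continuous_attains_sup[OF cK fK] by blast
    moreover obtain u where "u \<in> K" "\<forall>y\<in>K. f u \<le> f y" using continuous_attains_inf[OF cK fK] by blast
    ultimately have "fst (u,v) \<in> K \<and> snd (u,v) \<in> K \<and> (\<forall>y\<in>K. f (fst (u,v)) \<le> f y \<and> f y \<le> f (snd (u,v)))" by auto
    then show "\<exists>p. fst p \<in> K \<and> snd p \<in> K \<and> (\<forall>y\<in>K. f (fst p) \<le> f y \<and> f y \<le> f (snd p))" by blast
  qed
  from bchoice[OF this] obtain Q where
    Q: "\<forall>K\<in>\<D>. fst (Q K) \<in> K \<and> snd (Q K) \<in> K \<and> (\<forall>y\<in>K. f (fst (Q K)) \<le> f y \<and> f y \<le> f (snd (Q K)))"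
    by blast
  define m where "m = (\<lambda>K. fst (Q K))"
  define M where "M = (\<lambda>K. snd (Q K))"
  have mM: "m K \<in> K \<and> M K \<in> K \<and> (\<forall>y\<in>K. f (m K) \<le> f y \<and> f y \<le> f (M K))" if "K \<in> \<D>" for K
    using Q that unfolding m_def M_def by blast
  define IV where "IV = (\<lambda>K. {f (m K) .. f (M K)})"
  define a where "a = (\<lambda>K. min (m K) (M K))"
  define b where "b = (\<lambda>K. max (m K) (M K))"
  have fin_bound: "measure lebesgue (\<Union>(IV ` D')) \<le> e" if D': "finite D'" "D' \<subseteq> \<D>" for D'
  proof -
    have Km: "S \<in> lmeasurable" if "S \<in> D'" for S
    proof -
      have S: "S \<in> \<D>" using D' that by auto
      show "S \<in> lmeasurable" by (subst eqK[OF S]) simp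
    qed
    have UD'm: "\<Union>D' \<in> lmeasurable" using D'(1) Km by (intro fmeasurable.finite_Union) auto
    have "measure lebesgue (\<Union>(IV ` D')) \<le> (\<Sum>K\<in>D'. measure lebesgue (IV K))"
      by (rule measure_UNION_le[OF D'(1)]) (auto simp: IV_def)
    also have "\<dots> = (\<Sum>K\<in>D'. \<bar>f (b K) - f (a K)\<bar>)"
    proof (rule sum.cong[OF refl])
      fix K assume "K \<in> D'"
      then have K: "K \<in> \<D>" using D' by auto
      have le: "f (m K) \<le> f (M K)" using mM[OF K] by blast
      show "measure lebesgue (IV K) = \<bar>f (b K) - f (a K)\<bar>"
        using le by (auto simp: IV_def a_def b_def min_def max_def)
    qed
    also have "\<dots> < e"
    proof (rule AC[OF D'(1)])
      show "\<forall>i\<in>D'. 0 \<le> a i \<and> a i \<le> b i \<and> b i \<le> 1"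
      proof
        fix K assume "K \<in> D'"
        then have K: "K \<in> \<D>" using D' by auto
        show "0 \<le> a K \<and> a K \<le> b K \<and> b K \<le> 1"
          using mM[OF K] lohi[OF K] by (auto simp: a_def b_def)
      qed
      show "\<forall>i\<in>D'. \<forall>j\<in>D'. i \<noteq> j \<and> a i < b i \<and> a j < b j \<longrightarrow> b i \<le> a j \<or> b j \<le> a i"
      proof (intro ballI impI)
        fix K K' assume KK: "K \<in> D'" "K' \<in> D'" "K \<noteq> K' \<and> a K < b K \<and> a K' < b K'"
        then have K: "K \<in> \<D>" and K': "K' \<in> \<D>" using D' by auto
        have int: "interior K \<inter> interior K' = {}"
          using pw K K' KK unfolding pairwise_def by blast
        have abK: "lo K \<le> a K" "b K \<le> hi K" using mM[OF K] lohi[OF K] by (auto simp: a_def b_def)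
        have abK': "lo K' \<le> a K'" "b K' \<le> hi K'" using mM[OF K'] lohi[OF K'] by (auto simp: a_def b_def)
        have "hi K \<le> lo K' \<or> hi K' \<le> lo K"
          by (rule real_interval_nonoverlap[OF int eqK[OF K] eqK[OF K']]) (use KK abK abK' in auto)
        then show "b K \<le> a K' \<or> b K' \<le> a K" using abK abK' by auto
      qed
      have "(\<Sum>K\<in>D'. b K - a K) \<le> (\<Sum>K\<in>D'. measure lebesgue K)"
      proof (rule sum_mono)
        fix K assume "K \<in> D'"
        then have K: "K \<in> \<D>" using D' by auto
        have "b K - a K \<le> hi K - lo K" using mM[OF K] lohi[OF K] by (auto simp: a_def b_def)
        also have "\<dots> = measure lebesgue {lo K..hi K}" using lohi[OF K] by simp
        also have "\<dots> = measure lebesgue K" using eqK[OF K] by simp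
        finally show "b K - a K \<le> measure lebesgue K" .
      qed
      also have "\<dots> = measure lebesgue (\<Union>D')"
      proof (rule measure_negligible_finite_Union[symmetric, OF D'(1)])
        fix S assume "S \<in> D'"
        then have S: "S \<in> \<D>" using D' by auto
        show "S \<in> lmeasurable" by (subst eqK[OF S]) simp
      next
        show "pairwise (\<lambda>S T. negligible (S \<inter> T)) D'"
          unfolding pairwise_def
        proof (intro ballI impI)
          fix K K' assume KK: "K \<in> D'" "K' \<in> D'" "K \<noteq> K'"
          then have K: "K \<in> \<D>" and K': "K' \<in> \<D>" using D' by auto
          have int: "interior K \<inter> interior K' = {}"
            using pw K K' KK unfolding pairwise_def by blast
          show "negligible (K \<inter> K')"
            by (rule real_interval_Int_negligible[OF int eqK[OF K] eqK[OF K']])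
        qed
      qed
      also have "\<dots> \<le> measure lebesgue (\<Union>\<D>)"
        by (rule measure_mono_fmeasurable) (use D' Um UD'm in \<open>auto simp: fmeasurable_def\<close>)
      also have "\<dots> < d" using mU N0 d by simp
      finally show "(\<Sum>K\<in>D'. b K - a K) < d" .
    qed
    finally show ?thesis by simp
  qed
  show "\<exists>T. f ` N \<subseteq> T \<and> T \<in> lmeasurable \<and> measure lebesgue T \<le> e"
  proof (cases "\<D> = {}")
    case True
    then have "N = {}" using cov by auto
    then show ?thesis using e by (intro exI[of _ "{}"]) auto
  next
    case False
    define K where "K = from_nat_into \<D>"
    have rng: "range K = \<D>" unfolding K_def using range_from_nat_into[OF False cnt] .
    define S where "S = (\<lambda>n. \<Union>(IV ` K ` {..n}))"
    have Sm: "S n \<in> lmeasurable" for n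
      unfolding S_def IV_def by (intro fmeasurable.finite_UN) auto
    have Sb: "measure lebesgue (S n) \<le> e" for n
      unfolding S_def image_image[symmetric]
      by (rule fin_bound) (use rng in auto)
    have Sinc: "S n \<subseteq> S (Suc n)" for n unfolding S_def by (intro Union_mono image_mono) auto
    have US: "\<Union>(range S) = \<Union>(IV ` \<D>)"
      unfolding S_def rng[symmetric] by auto
    have "\<Union>(range S) \<in> lmeasurable" by (rule measurable_nested_Union[of S e, OF Sm Sb Sinc])
    moreover have "measure lebesgue (\<Union>(range S)) \<le> e"
      by (rule LIMSEQ_le_const2[OF measure_nested_Union[of S e, OF Sm Sb Sinc]]) (use Sb in auto)
    moreover have "f ` N \<subseteq> \<Union>(IV ` \<D>)"
    proof
      fix y assume "y \<in> f ` N"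
      then obtain x where x: "x \<in> N" "y = f x" by auto
      then obtain K where "K \<in> \<D>" "x \<in> K" using cov by auto
      then show "y \<in> \<Union>(IV ` \<D>)" using mM[OF \<open>K \<in> \<D>\<close>] x by (auto simp: IV_def)
    qed
    ultimately show ?thesis using US by (intro exI[of _ "\<Union>(IV ` \<D>)"]) auto
  qed
qed

lemma measure_image_deriv_le:
  fixes h h' :: "real \<Rightarrow> real"
  assumes S: "S \<in> sets lebesgue"
    and der: "\<And>x. x \<in> S \<Longrightarrow> (h has_real_derivative h' x) (at x within S)"
    and int: "(\<lambda>x. \<bar>h' x\<bar>) integrable_on S"
  shows "h ` S \<in> lmeasurable \<and> measure lebesgue (h ` S) \<le> integral S (\<lambda>x. \<bar>h' x\<bar>)"
proof -
  let ?lift = "vec :: real \<Rightarrow> real^1"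
  define S' where "S' = ?lift ` S"
  define F where "F = (\<lambda>x::real^1. ?lift (h (x $ 1)))"
  have S': "S' \<in> sets lebesgue"
    unfolding S'_def by (auto intro: differentiable_image_in_sets_lebesgue [OF S] differentiable_vec)
  have dropS': "(\<lambda>x. x $ 1) ` S' = S" unfolding S'_def by (auto simp: image_image)
  have der': "(F has_derivative (*\<^sub>R) (h' (x $ 1))) (at x within S')" if x: "x \<in> S'" for x
  proof -
    obtain z where z: "z \<in> S" "x = ?lift z" using x unfolding S'_def by auto
    have eq: "(\<lambda>y. y * h' z) = (*) (h' z)" by (auto simp: mult.commute)
    have "(h has_derivative (\<lambda>y. y * h' z)) (at z within S)"
      using der[OF z(1)] unfolding has_field_derivative_def eq .
    from has_derivative_vector_1[where g=h and g'=h' and a=z and S=S, OF this]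
    show ?thesis using z unfolding F_def S'_def by simp
  qed
  have "((\<lambda>x::real^1. \<bar>h' (x $ 1)\<bar>) \<circ> vec has_integral integral S (\<lambda>x. \<bar>h' x\<bar>)) ((\<lambda>x. x $ 1) ` S')"
    using int unfolding dropS' by (simp add: o_def integrable_integral)
  then have intS': "((\<lambda>x::real^1. \<bar>h' (x $ 1)\<bar>) has_integral integral S (\<lambda>x. \<bar>h' x\<bar>)) S'"
    by (rule has_integral_vec1_D)
  have int': "(\<lambda>x. \<bar>det (matrix ((*\<^sub>R) (h' (x $ 1)) :: real^1 \<Rightarrow> real^1))\<bar>) integrable_on S'"
    using intS' by (auto simp: has_integral_integrable)
  have meas: "F ` S' \<in> lmeasurable"
    by (rule measurable_differentiable_image[OF S' der' int'])
  have mle: "measure lebesgue (F ` S') \<le> integral S' (\<lambda>x. \<bar>det (matrix ((*\<^sub>R) (h' (x $ 1)) :: real^1 \<Rightarrow> real^1))\<bar>)"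
    by (rule measure_differentiable_image[OF S' der' int'])
  also have "\<dots> = integral S (\<lambda>x. \<bar>h' x\<bar>)" using intS' by (simp add: integral_unique)
  finally have mle': "measure lebesgue (F ` S') \<le> integral S (\<lambda>x. \<bar>h' x\<bar>)" .
  have FS: "F ` S' = ?lift ` (h ` S)" unfolding F_def S'_def by (auto simp: image_image)
  have "((\<lambda>x::real^1. 1::real) has_integral measure lebesgue (F ` S')) (F ` S')"
    using meas by (simp add: lmeasure_integral lmeasurable_iff_integrable_on integrable_integral)
  then have "((\<lambda>x::real^1. 1::real) \<circ> vec has_integral measure lebesgue (F ` S')) ((\<lambda>x. x $ 1) ` (F ` S'))"
    by (rule has_integral_vec1_I)
  moreover have "(\<lambda>x. x $ 1) ` (F ` S') = h ` S" unfolding FS by (auto simp: image_image)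
  ultimately have hi: "((\<lambda>x::real. 1::real) has_integral measure lebesgue (F ` S')) (h ` S)"
    by (simp add: o_def)
  then have hm: "h ` S \<in> lmeasurable" by (auto simp: lmeasurable_iff_integrable_on has_integral_integrable)
  moreover have "measure lebesgue (h ` S) = measure lebesgue (F ` S')"
    using hm hi by (simp add: lmeasure_integral integral_unique)
  ultimately show ?thesis using mle' by simp
qed

definition clampM :: "real \<Rightarrow> real \<Rightarrow> real" where
  "clampM M y = max (- M) (min M y)"

lemma clampM_cont: "continuous_on UNIV (clampM M)"
  unfolding clampM_def by (intro continuous_intros)

lemma clampM_bound: "M \<ge> 0 \<Longrightarrow> \<bar>clampM M y\<bar> \<le> M"
  by (auto simp: clampM_def)

lemma clampM_diff: "M \<ge> 0 \<Longrightarrow> \<bar>y - clampM M y\<bar> \<le> \<bar>y\<bar>"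
  by (auto simp: clampM_def)

lemma clampM_id: "\<bar>y\<bar> \<le> M \<Longrightarrow> clampM M y = y"
  by (auto simp: clampM_def)

lemma clampM_tendsto: "(\<lambda>n. X n) \<longlonglongrightarrow> y \<Longrightarrow> (\<lambda>n. clampM M (X n)) \<longlonglongrightarrow> clampM M y"
  unfolding clampM_def by (intro tendsto_intros)

lemma fin01: "finite_measure (lebesgue_on {0..1::real})"
  by (rule finite_measure_lebesgue_on) simp

lemma cont_meas01: "continuous_on UNIV p \<Longrightarrow> p \<in> borel_measurable (lebesgue_on {0..1::real})"
  by (rule continuous_imp_measurable_on_sets_lebesgue) (auto intro: continuous_on_subset)

lemma cont_bounded01:
  assumes "continuous_on UNIV (p::real \<Rightarrow> real)"
  obtains B where "B \<ge> 0" "\<And>t. t \<in> {0..1} \<Longrightarrow> \<bar>p t\<bar> \<le> B"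
proof -
  have "compact (p ` {0..1})"
    by (rule compact_continuous_image) (auto intro: continuous_on_subset[OF assms])
  then obtain B where "B > 0" "\<forall>y\<in>p ` {0..1}. norm y \<le> B"
    using compact_imp_bounded bounded_pos by metis
  then show ?thesis using that[of B] by auto
qed

lemma cont_integrable01:
  assumes "continuous_on UNIV (p::real \<Rightarrow> real)"
  shows "integrable (lebesgue_on {0..1}) p"
proof -
  obtain B where B: "B \<ge> 0" "\<And>t. t \<in> {0..1} \<Longrightarrow> \<bar>p t\<bar> \<le> B"
    using cont_bounded01[OF assms] by blast
  show ?thesis
  proof (rule Bochner_Integration.integrable_bound[where f="\<lambda>x. B"])
    show "integrable (lebesgue_on {0..1::real}) (\<lambda>x. B)" by (rule finite_measure.integrable_const[OF fin01])
    show "p \<in> borel_measurable (lebesgue_on {0..1})" by (rule cont_meas01[OF assms])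
    show "AE x in lebesgue_on {0..1}. norm (p x) \<le> norm B"
      using B by (intro AE_I2) auto
  qed
qed

lemma cont_approx_L1:
  fixes g :: "real \<Rightarrow> real"
  assumes g: "integrable (lebesgue_on {0..1}) g" and e: "e > 0"
  obtains p where "continuous_on UNIV p"
    "integral\<^sup>L (lebesgue_on {0..1}) (\<lambda>t. \<bar>g t - p t\<bar>) < e"
proof -
  let ?M = "lebesgue_on {0..1::real}"
  have gm: "g \<in> borel_measurable ?M" using g by auto
  have Gm: "(\<lambda>x. indicat_real {0..1} x *\<^sub>R g x) \<in> borel_measurable lebesgue"
    using gm by (subst (asm) borel_measurable_restrict_space_iff) auto
  have "(\<lambda>x. indicat_real {0..1} x *\<^sub>R g x) measurable_on {0..1}"
    by (rule lebesgue_measurable_imp_measurable_on_real[OF Gm]) simp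
  then obtain N q where N: "negligible N" and qc: "\<And>n. continuous_on UNIV (q n)"
    and qlim: "\<And>x. x \<notin> N \<Longrightarrow> (\<lambda>n. q n x) \<longlonglongrightarrow> (if x \<in> {0..1} then indicat_real {0..1} x *\<^sub>R g x else 0)"
    unfolding measurable_on_def by blast
  have AEN: "AE x in lebesgue. x \<notin> N" using N by (intro AE_not_in) (simp add: negligible_iff_null_sets)
  have qlim': "AE x in ?M. (\<lambda>n. q n x) \<longlonglongrightarrow> g x"
  proof (subst AE_restrict_space_iff)
    show "{0..1::real} \<inter> space lebesgue \<in> sets lebesgue" by simp
    show "AE x in lebesgue. x \<in> {0..1} \<longrightarrow> (\<lambda>n. q n x) \<longlonglongrightarrow> g x"
      using AEN
    proof (rule AE_mp, intro AE_I2 impI)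
      fix x assume x: "x \<notin> N" "x \<in> {0..1}"
      have "(if x \<in> {0..1} then indicat_real {0..1} x *\<^sub>R g x else 0) = g x" using x by simp
      then show "(\<lambda>n. q n x) \<longlonglongrightarrow> g x" using qlim[OF x(1)] by simp
    qed
  qed
  \<comment> \<open>Step A: truncation\<close>
  have A: "(\<lambda>m::nat. integral\<^sup>L ?M (\<lambda>x. \<bar>g x - clampM (real m) (g x)\<bar>)) \<longlonglongrightarrow> integral\<^sup>L ?M (\<lambda>x. 0)"
  proof (rule integral_dominated_convergence[where w = "\<lambda>x. \<bar>g x\<bar>"])
    show "(\<lambda>x. 0::real) \<in> borel_measurable ?M" by simp
    show "(\<lambda>x. \<bar>g x - clampM (real m) (g x)\<bar>) \<in> borel_measurable ?M" for m
      using gm unfolding clampM_def by measurable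
    show "integrable ?M (\<lambda>x. \<bar>g x\<bar>)" using g by simp
    show "AE x in ?M. (\<lambda>m. \<bar>g x - clampM (real m) (g x)\<bar>) \<longlonglongrightarrow> 0"
    proof (rule AE_I2)
      fix x
      obtain m0 :: nat where "\<bar>g x\<bar> \<le> real m0" using real_arch_simple by blast
      then have "\<forall>m\<ge>m0. \<bar>g x - clampM (real m) (g x)\<bar> = 0"
        by (auto simp: clampM_id)
      then show "(\<lambda>m. \<bar>g x - clampM (real m) (g x)\<bar>) \<longlonglongrightarrow> 0"
        by (intro tendsto_eventually) (auto simp: eventually_sequentially)
    qed
    show "AE x in ?M. norm \<bar>g x - clampM (real m) (g x)\<bar> \<le> \<bar>g x\<bar>" for m
      by (intro AE_I2) (simp add: clampM_diff)
  qed
  then have "eventually (\<lambda>m. integral\<^sup>L ?M (\<lambda>x. \<bar>g x - clampM (real m) (g x)\<bar>) < e/2) sequentially"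
    using e by (intro order_tendstoD(2)) auto
  then obtain m :: nat where m: "integral\<^sup>L ?M (\<lambda>x. \<bar>g x - clampM (real m) (g x)\<bar>) < e/2"
    unfolding eventually_sequentially by blast
  \<comment> \<open>Step B\<close>
  have B: "(\<lambda>n. integral\<^sup>L ?M (\<lambda>x. \<bar>clampM (real m) (g x) - clampM (real m) (q n x)\<bar>)) \<longlonglongrightarrow> integral\<^sup>L ?M (\<lambda>x. 0)"
  proof (rule integral_dominated_convergence[where w = "\<lambda>x. 2 * real m"])
    show "(\<lambda>x. 0::real) \<in> borel_measurable ?M" by simp
    show "(\<lambda>x. \<bar>clampM (real m) (g x) - clampM (real m) (q n x)\<bar>) \<in> borel_measurable ?M" for n
      using gm cont_meas01[OF qc[of n]] unfolding clampM_def by measurable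
    show "integrable ?M (\<lambda>x. 2 * real m)" by (rule finite_measure.integrable_const[OF fin01])
    show "AE x in ?M. (\<lambda>n. \<bar>clampM (real m) (g x) - clampM (real m) (q n x)\<bar>) \<longlonglongrightarrow> 0"
      using qlim' proof (rule AE_mp, intro AE_I2 impI)
      fix x assume "(\<lambda>n. q n x) \<longlonglongrightarrow> g x"
      then have cl: "(\<lambda>n. clampM (real m) (q n x)) \<longlonglongrightarrow> clampM (real m) (g x)" by (rule clampM_tendsto)
      have "(\<lambda>n. clampM (real m) (g x) - clampM (real m) (q n x)) \<longlonglongrightarrow> 0"
        using tendsto_diff[OF tendsto_const[of "clampM (real m) (g x)"] cl] by simp
      then show "(\<lambda>n. \<bar>clampM (real m) (g x) - clampM (real m) (q n x)\<bar>) \<longlonglongrightarrow> 0"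
        by (rule tendsto_rabs_zero)
    qed
    show "AE x in ?M. norm \<bar>clampM (real m) (g x) - clampM (real m) (q n x)\<bar> \<le> 2 * real m" for n
    proof (intro AE_I2)
      fix x
      have "\<bar>clampM (real m) (g x)\<bar> \<le> real m" "\<bar>clampM (real m) (q n x)\<bar> \<le> real m"
        by (simp_all add: clampM_bound)
      then show "norm \<bar>clampM (real m) (g x) - clampM (real m) (q n x)\<bar> \<le> 2 * real m" by simp
    qed
  qed
  then have "eventually (\<lambda>n. integral\<^sup>L ?M (\<lambda>x. \<bar>clampM (real m) (g x) - clampM (real m) (q n x)\<bar>) < e/2) sequentially"
    using e by (intro order_tendstoD(2)) auto
  then obtain n where n: "integral\<^sup>L ?M (\<lambda>x. \<bar>clampM (real m) (g x) - clampM (real m) (q n x)\<bar>) < e/2"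
    unfolding eventually_sequentially by blast
  define p where "p = (\<lambda>x. clampM (real m) (q n x))"
  have pc: "continuous_on UNIV p"
    unfolding p_def using continuous_on_compose2[OF clampM_cont qc[of n]] by auto
  have i1: "integrable ?M (\<lambda>x. \<bar>g x - clampM (real m) (g x)\<bar>)"
  proof (rule Bochner_Integration.integrable_bound[where f="\<lambda>x. \<bar>g x\<bar>"])
    show "integrable ?M (\<lambda>x. \<bar>g x\<bar>)" using g by simp
    show "(\<lambda>x. \<bar>g x - clampM (real m) (g x)\<bar>) \<in> borel_measurable ?M"
      using gm unfolding clampM_def by measurable
    show "AE x in ?M. norm \<bar>g x - clampM (real m) (g x)\<bar> \<le> norm \<bar>g x\<bar>"
      by (intro AE_I2) (simp add: clampM_diff)
  qed
  have i2: "integrable ?M (\<lambda>x. \<bar>clampM (real m) (g x) - p x\<bar>)"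
  proof (rule Bochner_Integration.integrable_bound[where f="\<lambda>x. 2 * real m"])
    show "integrable ?M (\<lambda>x. 2 * real m)" by (rule finite_measure.integrable_const[OF fin01])
    show "(\<lambda>x. \<bar>clampM (real m) (g x) - p x\<bar>) \<in> borel_measurable ?M"
      using gm cont_meas01[OF qc[of n]] unfolding clampM_def p_def by measurable
    show "AE x in ?M. norm \<bar>clampM (real m) (g x) - p x\<bar> \<le> norm (2 * real m)"
    proof (intro AE_I2)
      fix x
      have "\<bar>clampM (real m) (g x)\<bar> \<le> real m" "\<bar>p x\<bar> \<le> real m"
        by (simp_all add: clampM_bound p_def)
      then show "norm \<bar>clampM (real m) (g x) - p x\<bar> \<le> norm (2 * real m)" by simp
    qed
  qed
  have i3: "integrable ?M (\<lambda>x. \<bar>g x - p x\<bar>)"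
    using g cont_integrable01[OF pc] by simp
  have "integral\<^sup>L ?M (\<lambda>x. \<bar>g x - p x\<bar>)
      \<le> integral\<^sup>L ?M (\<lambda>x. \<bar>g x - clampM (real m) (g x)\<bar> + \<bar>clampM (real m) (g x) - p x\<bar>)"
    by (rule integral_mono[OF i3 Bochner_Integration.integrable_add[OF i1 i2]]) simp
  also have "\<dots> = integral\<^sup>L ?M (\<lambda>x. \<bar>g x - clampM (real m) (g x)\<bar>) + integral\<^sup>L ?M (\<lambda>x. \<bar>clampM (real m) (g x) - p x\<bar>)"
    by (rule Bochner_Integration.integral_add[OF i1 i2])
  also have "\<dots> < e/2 + e/2" using m n unfolding p_def by simp
  finally show ?thesis using that[OF pc] by simp
qed

lemma bochner_hk:
  fixes f :: "real \<Rightarrow> real"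
  assumes f: "integrable (lebesgue_on S) f" and S: "S \<in> sets lebesgue"
  shows "f absolutely_integrable_on S" "integral\<^sup>L (lebesgue_on S) f = integral S f"
proof -
  have "integrable lebesgue (\<lambda>x. indicat_real S x *\<^sub>R f x)"
    using f S by (subst (asm) integrable_restrict_space) auto
  then show ai: "f absolutely_integrable_on S" unfolding set_integrable_def .
  have "integral\<^sup>L (lebesgue_on S) f = (LINT x|lebesgue. indicat_real S x *\<^sub>R f x)"
    using S by (subst integral_restrict_space) auto
  also have "\<dots> = set_lebesgue_integral lebesgue S f" by (simp add: set_lebesgue_integral_def)
  also have "\<dots> = integral S f" by (rule set_lebesgue_integral_eq_integral(2)[OF ai])
  finally show "integral\<^sup>L (lebesgue_on S) f = integral S f" .
qed

lemma ac_lip: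
  assumes L: "L \<ge> 0" and lip: "\<And>x y. x \<in> {0..1} \<Longrightarrow> y \<in> {0..1} \<Longrightarrow> x \<le> y \<Longrightarrow> \<bar>F y - F x\<bar> \<le> L * (y - x)"
  shows "abs_cont_01 F"
proof (rule ac_I)
  fix e :: real assume e: "e > 0"
  show "\<exists>d>0. \<forall>(n::nat) a b.
      (\<forall>i<n. 0 \<le> a i \<and> a i \<le> b i \<and> b i \<le> 1) \<longrightarrow>
      (\<forall>i j. i < j \<and> j < n \<longrightarrow> b i \<le> a j) \<longrightarrow>
      (\<Sum>i<n. b i - a i) < d
      \<longrightarrow> (\<Sum>i<n. \<bar>F (b i) - F (a i)\<bar>) < e"
  proof (intro exI[of _ "e/(L+1)"] conjI allI impI)
    show "e/(L+1) > 0" using e L by simp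
    fix n :: nat and a b :: "nat \<Rightarrow> real"
    assume A: "\<forall>i<n. 0 \<le> a i \<and> a i \<le> b i \<and> b i \<le> 1" and C: "(\<Sum>i<n. b i - a i) < e/(L+1)"
    have "(\<Sum>i<n. \<bar>F (b i) - F (a i)\<bar>) \<le> (\<Sum>i<n. L * (b i - a i))"
      by (rule sum_mono) (use A in \<open>auto intro!: lip\<close>)
    also have "\<dots> = L * (\<Sum>i<n. b i - a i)" by (simp add: sum_distrib_left)
    also have "\<dots> \<le> L * (e/(L+1))" using C L by (intro mult_left_mono) auto
    also have "\<dots> < e" using L e by (simp add: field_simps)
    finally show "(\<Sum>i<n. \<bar>F (b i) - F (a i)\<bar>) < e" .
  qed
qed

lemma prim_ac:
  fixes p :: "real \<Rightarrow> real"
  assumes pc: "continuous_on UNIV p"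
  shows "abs_cont_01 (\<lambda>t. integral {0..t} p)"
proof -
  obtain B where B: "B \<ge> 0" "\<And>t. t \<in> {0..1} \<Longrightarrow> \<bar>p t\<bar> \<le> B"
    using cont_bounded01[OF pc] by blast
  show ?thesis
  proof (rule ac_lip[OF B(1)])
    fix x y :: real assume x: "x \<in> {0..1}" and y: "y \<in> {0..1}" and xy: "x \<le> y"
    have pi: "p integrable_on {0..y}"
      by (rule integrable_continuous_real) (auto intro: continuous_on_subset[OF pc])
    have "integral {0..x} p + integral {x..y} p = integral {0..y} p"
      by (rule Henstock_Kurzweil_Integration.integral_combine) (use x y xy pi in auto)
    then have eq: "integral {0..y} p - integral {0..x} p = integral {x..y} p" by simp
    have pxy: "p integrable_on cbox x y"
      by (simp add: cbox_interval) (rule integrable_continuous_real, auto intro: continuous_on_subset[OF pc])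
    have "norm (integral (cbox x y) p) \<le> B * Henstock_Kurzweil_Integration.content (cbox x y)"
      by (rule integrable_bound[OF B(1) pxy]) (use x y B(2) in \<open>auto simp: cbox_interval\<close>)
    then show "\<bar>integral {0..y} p - integral {0..x} p\<bar> \<le> B * (y - x)"
      unfolding eq using xy by (simp add: cbox_interval)
  qed
qed

lemma interval_image_bound:
  fixes h :: "real \<Rightarrow> real"
  assumes hc: "continuous_on {0..1} h"
  shows "\<bar>h 1 - h 0\<bar> \<le> measure lebesgue (h ` {0..1})"
proof -
  have conn: "connected (h ` {0..1})" by (rule connected_continuous_image[OF hc]) simp
  have cpt: "compact (h ` {0..1})" by (rule compact_continuous_image[OF hc]) simp
  have sub: "{min (h 0) (h 1)..max (h 0) (h 1)} \<subseteq> h ` {0..1}"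
  proof
    fix y assume y: "y \<in> {min (h 0) (h 1)..max (h 0) (h 1)}"
    have "h 0 \<in> h ` {0..1}" "h 1 \<in> h ` {0..1}" by auto
    have iv: "is_interval (h ` {0..1})" using conn by (simp add: is_interval_connected_1)
    then have iv': "\<And>a b x. a \<in> h ` {0..1} \<Longrightarrow> b \<in> h ` {0..1} \<Longrightarrow> a \<le> x \<Longrightarrow> x \<le> b \<Longrightarrow> x \<in> h ` {0..1}"
      unfolding is_interval_1 by blast
    have h0: "h 0 \<in> h ` {0..1}" and h1: "h 1 \<in> h ` {0..1}" by auto
    show "y \<in> h ` {0..1}"
    proof (cases "h 0 \<le> h 1")
      case True
      then show ?thesis using iv'[OF h0 h1, of y] y by (simp add: min_def max_def)
    next
      case False
      then show ?thesis using iv'[OF h1 h0, of y] y by (simp add: min_def max_def)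
    qed
  qed
  have "\<bar>h 1 - h 0\<bar> = measure lebesgue {min (h 0) (h 1)..max (h 0) (h 1)}"
    by (auto simp: min_def max_def)
  also have "\<dots> \<le> measure lebesgue (h ` {0..1})"
    by (rule measure_mono_fmeasurable[OF sub]) (use cpt in \<open>auto intro: lmeasurable_compact\<close>)
  finally show ?thesis .
qed

lemma ftc_ac_ineq:
  fixes f g p :: "real \<Rightarrow> real"
  assumes f: "abs_cont_01 f"
    and D: "D \<subseteq> {0..1}" "negligible ({0..1} - D)"
    and der: "\<And>t. t \<in> D \<Longrightarrow> (f has_real_derivative g t) (at t)"
    and g: "integrable (lebesgue_on {0..1}) g"
    and pc: "continuous_on UNIV p"
  shows "\<bar>f 1 - f 0 - integral\<^sup>L (lebesgue_on {0..1}) p\<bar> \<le> integral\<^sup>L (lebesgue_on {0..1}) (\<lambda>t. \<bar>g t - p t\<bar>)"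
proof -
  let ?M = "lebesgue_on {0..1::real}"
  define P where "P = (\<lambda>t. integral {0..t} p)"
  define h where "h = (\<lambda>t. f t - P t)"
  have hac: "abs_cont_01 h" unfolding h_def P_def by (rule ac_diff[OF f prim_ac[OF pc]])
  have Nneg: "negligible ({0..1} - D)" by (rule D(2))
  have Dm: "D \<in> sets lebesgue"
  proof -
    have "D = {0..1} - ({0..1} - D)" using D(1) by auto
    also have "\<dots> \<in> sets lebesgue" using negligible_imp_sets[OF Nneg] by auto
    finally show ?thesis .
  qed
  have pc01: "continuous_on {0..1} p" by (rule continuous_on_subset[OF pc]) auto
  have hder: "(h has_real_derivative (g t - p t)) (at t within D)" if t: "t \<in> D" for t
  proof -
    have t01: "t \<in> {0..1}" using t D(1) by auto
    have "(P has_vector_derivative p t) (at t within {0..1})"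
      unfolding P_def by (rule integral_has_vector_derivative[OF pc01 t01])
    then have "(P has_real_derivative p t) (at t within {0..1})"
      by (simp add: has_real_derivative_iff_has_vector_derivative)
    then have dP: "(P has_real_derivative p t) (at t within D)"
      by (rule has_field_derivative_subset) (rule D(1))
    have dF: "(f has_real_derivative g t) (at t within D)"
      by (rule has_field_derivative_at_within[OF der[OF t]])
    show ?thesis unfolding h_def by (rule DERIV_diff[OF dF dP])
  qed
  have pint: "integrable ?M p" by (rule cont_integrable01[OF pc])
  have gp: "integrable ?M (\<lambda>t. \<bar>g t - p t\<bar>)" using g pint by simp
  have gpai: "(\<lambda>t. \<bar>g t - p t\<bar>) absolutely_integrable_on {0..1}"
    by (rule bochner_hk(1)[OF gp]) simp
  have gpD: "(\<lambda>t. \<bar>g t - p t\<bar>) absolutely_integrable_on D"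
    by (rule set_integrable_subset[OF gpai Dm D(1)])
  have gpDi: "(\<lambda>t. \<bar>g t - p t\<bar>) integrable_on D"
    by (rule set_lebesgue_integral_eq_integral(1)[OF gpD])
  have gp01i: "(\<lambda>t. \<bar>g t - p t\<bar>) integrable_on {0..1}"
    by (rule set_lebesgue_integral_eq_integral(1)[OF gpai])
  have im: "h ` D \<in> lmeasurable \<and> measure lebesgue (h ` D) \<le> integral D (\<lambda>t. \<bar>g t - p t\<bar>)"
    by (rule measure_image_deriv_le[OF Dm hder gpDi])
  have "integral D (\<lambda>t. \<bar>g t - p t\<bar>) \<le> integral {0..1} (\<lambda>t. \<bar>g t - p t\<bar>)"
    by (rule integral_subset_le[OF D(1) gpDi gp01i]) auto
  also have "\<dots> = integral\<^sup>L ?M (\<lambda>t. \<bar>g t - p t\<bar>)"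
    by (rule bochner_hk(2)[OF gp, symmetric]) simp
  finally have imle: "measure lebesgue (h ` D) \<le> integral\<^sup>L ?M (\<lambda>t. \<bar>g t - p t\<bar>)" using im by simp
  have hN: "negligible (h ` ({0..1} - D))" by (rule ac_luzin[OF hac _ Nneg]) auto
  have hc: "continuous_on {0..1} h" by (rule ac_cont[OF hac])
  have cpt: "compact (h ` {0..1})" by (rule compact_continuous_image[OF hc]) simp
  have sub: "h ` {0..1} \<subseteq> h ` D \<union> h ` ({0..1} - D)" by auto
  have Um: "h ` D \<union> h ` ({0..1} - D) \<in> lmeasurable"
    using im negligible_imp_measurable[OF hN] by auto
  have "\<bar>h 1 - h 0\<bar> \<le> measure lebesgue (h ` {0..1})" by (rule interval_image_bound[OF hc])
  also have "\<dots> \<le> measure lebesgue (h ` D \<union> h ` ({0..1} - D))"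
    using lmeasurable_compact[OF cpt] Um by (intro measure_mono_fmeasurable[OF sub]) (auto simp: fmeasurable_def)
  also have "\<dots> = measure lebesgue (h ` D)"
    by (rule measure_Un_null_set) (use im hN in \<open>auto simp: negligible_iff_null_sets\<close>)
  finally have hb: "\<bar>h 1 - h 0\<bar> \<le> integral\<^sup>L ?M (\<lambda>t. \<bar>g t - p t\<bar>)" using imle by simp
  have "integral {0..1} p = integral\<^sup>L ?M p" by (rule bochner_hk(2)[OF pint, symmetric]) simp
  moreover have "P 0 = 0" unfolding P_def by simp
  ultimately have "h 1 - h 0 = f 1 - f 0 - integral\<^sup>L ?M p" unfolding h_def P_def by simp
  then show ?thesis using hb by simp
qed

lemma ftc_ac:
  fixes f g :: "real \<Rightarrow> real"
  assumes f: "abs_cont_01 f"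
    and der: "AE t in lebesgue_on {0..1}. (f has_real_derivative g t) (at t)"
    and g: "integrable (lebesgue_on {0..1}) g"
  shows "f 1 - f 0 = integral\<^sup>L (lebesgue_on {0..1}) g"
proof -
  let ?M = "lebesgue_on {0..1::real}"
  define D where "D = {t \<in> {0..1}. (f has_real_derivative g t) (at t)}"
  have D1: "D \<subseteq> {0..1}" unfolding D_def by auto
  have "AE t in lebesgue. t \<in> {0..1} \<longrightarrow> (f has_real_derivative g t) (at t)"
    using der by (subst (asm) AE_restrict_space_iff) auto
  then obtain N where N: "{x \<in> space lebesgue. \<not> (x \<in> {0..1} \<longrightarrow> (f has_real_derivative g x) (at x))} \<subseteq> N"
    "emeasure lebesgue N = 0" "N \<in> sets lebesgue"
    by (rule AE_E)
  have "negligible N" using N(2,3) by (simp add: negligible_iff_null_sets null_sets_def)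
  moreover have "{0..1} - D \<subseteq> N" using N(1) unfolding D_def by auto
  ultimately have D2: "negligible ({0..1} - D)" by (rule negligible_subset)
  have der': "\<And>t. t \<in> D \<Longrightarrow> (f has_real_derivative g t) (at t)" unfolding D_def by auto
  have bound: "\<bar>f 1 - f 0 - integral\<^sup>L ?M g\<bar> < e" if e: "e > 0" for e
  proof -
    obtain p where pc: "continuous_on UNIV p" and pe: "integral\<^sup>L ?M (\<lambda>t. \<bar>g t - p t\<bar>) < e/2"
      using cont_approx_L1[OF g, of "e/2"] e by auto
    have pint: "integrable ?M p" by (rule cont_integrable01[OF pc])
    have i1: "\<bar>f 1 - f 0 - integral\<^sup>L ?M p\<bar> \<le> integral\<^sup>L ?M (\<lambda>t. \<bar>g t - p t\<bar>)"
      by (rule ftc_ac_ineq[OF f D1 D2 der' g pc])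
    have "\<bar>integral\<^sup>L ?M p - integral\<^sup>L ?M g\<bar> = \<bar>integral\<^sup>L ?M (\<lambda>t. g t - p t)\<bar>"
      using Bochner_Integration.integral_diff[OF g pint] by simp
    also have "\<dots> \<le> integral\<^sup>L ?M (\<lambda>t. \<bar>g t - p t\<bar>)" by (rule integral_abs_bound)
    finally have i2: "\<bar>integral\<^sup>L ?M p - integral\<^sup>L ?M g\<bar> \<le> integral\<^sup>L ?M (\<lambda>t. \<bar>g t - p t\<bar>)" .
    show ?thesis using i1 i2 pe by linarith
  qed
  show ?thesis
  proof (rule ccontr)
    assume "f 1 - f 0 \<noteq> integral\<^sup>L ?M g"
    then have "\<bar>f 1 - f 0 - integral\<^sup>L ?M g\<bar> > 0" by simp
    from bound[OF this] show False by simp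
  qed
qed

lemma L2_integrable:
  assumes "L2_01 u"
  shows "integrable (lebesgue_on {0..1}) u"
proof (rule Bochner_Integration.integrable_bound[where f="\<lambda>t. 1 + (u t)\<^sup>2"])
  show "integrable (lebesgue_on {0..1}) (\<lambda>t. 1 + (u t)\<^sup>2)"
    using assms finite_measure.integrable_const[OF fin01] unfolding L2_01_def by simp
  show "u \<in> borel_measurable (lebesgue_on {0..1})" using assms unfolding L2_01_def by simp
  show "AE x in lebesgue_on {0..1}. norm (u x) \<le> norm (1 + (u x)\<^sup>2)"
  proof (intro AE_I2)
    fix x
    have sq: "(u x)\<^sup>2 = \<bar>u x\<bar> * \<bar>u x\<bar>" by (simp add: power2_eq_square abs_mult_self_eq)
    have "\<bar>u x\<bar> \<le> 1 + (u x)\<^sup>2"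
    proof (cases "\<bar>u x\<bar> \<le> 1")
      case True then show ?thesis using zero_le_power2[of "u x"] by linarith
    next
      case False
      then have "\<bar>u x\<bar> * 1 \<le> \<bar>u x\<bar> * \<bar>u x\<bar>" by (intro mult_left_mono) auto
      then show ?thesis unfolding sq by simp
    qed
    then show "norm (u x) \<le> norm (1 + (u x)\<^sup>2)" by simp
  qed
qed

lemma L2_integrable_t:
  assumes "L2_01 u"
  shows "integrable (lebesgue_on {0..1}) (\<lambda>t. t * u t)"
proof (rule Bochner_Integration.integrable_bound[where f=u])
  show "integrable (lebesgue_on {0..1}) u" by (rule L2_integrable[OF assms])
  show "(\<lambda>t. t * u t) \<in> borel_measurable (lebesgue_on {0..1})"
  proof -
    have um: "u \<in> borel_measurable (lebesgue_on {0..1})" using assms unfolding L2_01_def by auto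
    have idm: "(\<lambda>t::real. t) \<in> borel_measurable (lebesgue_on {0..1})"
      by (rule cont_meas01) (rule continuous_on_id)
    show ?thesis by (rule borel_measurable_times[OF idm um])
  qed
  show "AE x in lebesgue_on {0..1}. norm (x * u x) \<le> norm (u x)"
  proof (rule AE_I2)
    fix x assume "x \<in> space (lebesgue_on {0..1::real})"
    then have x: "0 \<le> x" "x \<le> 1" by auto
    have "\<bar>x\<bar> * \<bar>u x\<bar> \<le> 1 * \<bar>u x\<bar>" using x by (intro mult_right_mono) auto
    then show "norm (x * u x) \<le> norm (u x)" by (simp add: abs_mult)
  qed
qed

lemma L2_add:
  assumes f: "L2_01 f" and g: "L2_01 g"
  shows "L2_01 (\<lambda>t. f t + g t)"
  unfolding L2_01_def
proof
  have fm: "f \<in> borel_measurable (lebesgue_on {0..1})" and gm: "g \<in> borel_measurable (lebesgue_on {0..1})"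
    using f g unfolding L2_01_def by auto
  show "(\<lambda>t. f t + g t) \<in> borel_measurable (lebesgue_on {0..1})"
    by (intro borel_measurable_add fm gm)
  show "integrable (lebesgue_on {0..1}) (\<lambda>t. (f t + g t)\<^sup>2)"
  proof (rule Bochner_Integration.integrable_bound[where f="\<lambda>t. 2 * (f t)\<^sup>2 + 2 * (g t)\<^sup>2"])
    show "integrable (lebesgue_on {0..1}) (\<lambda>t. 2 * (f t)\<^sup>2 + 2 * (g t)\<^sup>2)"
      using f g unfolding L2_01_def by simp
    show "(\<lambda>t. (f t + g t)\<^sup>2) \<in> borel_measurable (lebesgue_on {0..1})"
      by (intro borel_measurable_power borel_measurable_add fm gm)
    show "AE x in lebesgue_on {0..1}. norm ((f x + g x)\<^sup>2) \<le> norm (2 * (f x)\<^sup>2 + 2 * (g x)\<^sup>2)"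
    proof (intro AE_I2)
      fix x
      have "0 \<le> (f x - g x)\<^sup>2" by simp
      then have "(f x + g x)\<^sup>2 \<le> 2 * (f x)\<^sup>2 + 2 * (g x)\<^sup>2" by (simp add: power2_eq_square algebra_simps)
      then show "norm ((f x + g x)\<^sup>2) \<le> norm (2 * (f x)\<^sup>2 + 2 * (g x)\<^sup>2)" by simp
    qed
  qed
qed

lemma L2_scale:
  assumes f: "L2_01 f"
  shows "L2_01 (\<lambda>t. c * f t)"
  using f unfolding L2_01_def by (auto simp: power_mult_distrib)

lemma L2_cont:
  assumes "continuous_on UNIV q"
  shows "L2_01 q"
  unfolding L2_01_def
proof
  show "q \<in> borel_measurable (lebesgue_on {0..1})" by (rule cont_meas01[OF assms])
  have "continuous_on UNIV (\<lambda>t. (q t)\<^sup>2)" using assms by (intro continuous_intros)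
  then show "integrable (lebesgue_on {0..1}) (\<lambda>t. (q t)\<^sup>2)" by (rule cont_integrable01)
qed

lemma moments:
  assumes u: "u \<in> admissible s0 sf v0 vf"
  shows "integral\<^sup>L (lebesgue_on {0..1}) u = vf - v0"
    "integral\<^sup>L (lebesgue_on {0..1}) (\<lambda>t. t * u t) = s0 + vf - sf"
proof -
  obtain y1 y2 where uL: "L2_01 u" and W1: "W12_01 y1" and W2: "W12_01 y2"
    and AEd: "AE t in lebesgue_on {0..1}. (y1 has_real_derivative y2 t) (at t)
                                 \<and> (y2 has_real_derivative u t) (at t)"
    and bc: "y1 0 = s0" "y1 1 = sf" "y2 0 = v0" "y2 1 = vf"
    using u unfolding admissible_def by blast
  have ac1: "abs_cont_01 y1" and ac2: "abs_cont_01 y2" using W1 W2 unfolding W12_01_def by auto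
  have "y2 1 - y2 0 = integral\<^sup>L (lebesgue_on {0..1}) u"
    by (rule ftc_ac[OF ac2 _ L2_integrable[OF uL]]) (use AEd in \<open>auto elim: AE_mp\<close>)
  then show "integral\<^sup>L (lebesgue_on {0..1}) u = vf - v0" using bc by simp
  have acz: "abs_cont_01 (\<lambda>t. y1 t - t * y2 t)" by (intro ac_diff ac1 ac_mult ac_id ac2)
  have AEz: "AE t in lebesgue_on {0..1}. ((\<lambda>t. y1 t - t * y2 t) has_real_derivative (- (t * u t))) (at t)"
    using AEd
  proof (rule AE_mp, intro AE_I2 impI)
    fix t assume d: "(y1 has_real_derivative y2 t) (at t) \<and> (y2 has_real_derivative u t) (at t)"
    have "((\<lambda>t. y1 t - t * y2 t) has_real_derivative (y2 t - (1 * y2 t + u t * t))) (at t)"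
      using d by (intro DERIV_diff DERIV_mult DERIV_ident) auto
    then show "((\<lambda>t. y1 t - t * y2 t) has_real_derivative (- (t * u t))) (at t)"
      by (rule DERIV_cong) (simp add: algebra_simps)
  qed
  have intz: "integrable (lebesgue_on {0..1}) (\<lambda>t. - (t * u t))"
    using L2_integrable_t[OF uL] by simp
  have "(y1 1 - 1 * y2 1) - (y1 0 - 0 * y2 0) = integral\<^sup>L (lebesgue_on {0..1}) (\<lambda>t. - (t * u t))"
    using ftc_ac[OF acz AEz intz] by simp
  then show "integral\<^sup>L (lebesgue_on {0..1}) (\<lambda>t. t * u t) = s0 + vf - sf" using bc by simp
qed

theorem proposition1:
  fixes s0 sf v0 vf :: real
    and um x1 x2 :: "real \<Rightarrow> real"
  assumes "L2_01 um"
    and "W12_01 x1" and "W12_01 x2"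
    and "AE t in lebesgue_on {0..1}. (x1 has_real_derivative x2 t) (at t)
                                   \<and> (x2 has_real_derivative um t) (at t)"
    and "x1 0 = s0" and "x2 0 = v0"
  shows "let c1 = 12 * (x1 1 - sf) - 6 * (x2 1 - vf);
             c2 = - 6 * (x1 1 - sf) + 2 * (x2 1 - vf)
         in is_L2_projection (admissible s0 sf v0 vf) um (\<lambda>t. um t + c1 * t + c2)"
proof -
  note umL = assms(1) and W1 = assms(2) and W2 = assms(3) and AEx = assms(4)
  let ?M = "lebesgue_on {0..1::real}"
  define c1 where "c1 = 12 * (x1 1 - sf) - 6 * (x2 1 - vf)"
  define c2 where "c2 = - 6 * (x1 1 - sf) + 2 * (x2 1 - vf)"
  define p where "p = (\<lambda>t. um t + c1 * t + c2)"
  define A where "A = admissible s0 sf v0 vf"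
  define y2 where "y2 = (\<lambda>t. x2 t + (c1/2 * (t*t) + c2 * t))"
  define y1 where "y1 = (\<lambda>t. x1 t + (c1/6 * (t*t*t) + c2/2 * (t*t)))"
  have x1L: "L2_01 x1" and ac1: "abs_cont_01 x1" using W1 unfolding W12_01_def by auto
  have x2L: "L2_01 x2" and ac2: "abs_cont_01 x2" using W2 unfolding W12_01_def by auto
  have pL: "L2_01 p"
  proof -
    have "L2_01 (\<lambda>t. um t + (c1 * t + c2))"
      by (intro L2_add umL L2_cont) (intro continuous_intros)
    moreover have "(\<lambda>t. um t + (c1 * t + c2)) = p" by (auto simp: p_def)
    ultimately show ?thesis by simp
  qed
  have y2L: "L2_01 y2" unfolding y2_def by (intro L2_add x2L L2_cont) (intro continuous_intros)
  have y1L: "L2_01 y1" unfolding y1_def by (intro L2_add x1L L2_cont) (intro continuous_intros)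
  have acy2: "abs_cont_01 y2" unfolding y2_def by (intro ac_add ac2 ac_mult ac_const ac_id)
  have acy1: "abs_cont_01 y1" unfolding y1_def by (intro ac_add ac1 ac_mult ac_const ac_id)
  have AEy: "AE t in ?M. (y1 has_real_derivative y2 t) (at t) \<and> (y2 has_real_derivative p t) (at t)"
    using AEx
  proof (rule AE_mp, intro AE_I2 impI conjI)
    fix t assume d: "(x1 has_real_derivative x2 t) (at t) \<and> (x2 has_real_derivative um t) (at t)"
    have "(y2 has_real_derivative (um t + (c1/2 * (1 * t + 1 * t) + c2 * 1))) (at t)"
      unfolding y2_def using d by (intro DERIV_add DERIV_cmult DERIV_mult DERIV_ident) auto
    then show "(y2 has_real_derivative p t) (at t)"
      by (rule DERIV_cong) (simp add: p_def algebra_simps)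
    have "(y1 has_real_derivative (x2 t + (c1/6 * ((1 * t + 1 * t) * t + 1 * (t * t)) + c2/2 * (1 * t + 1 * t)))) (at t)"
      unfolding y1_def using d by (intro DERIV_add DERIV_cmult DERIV_mult DERIV_ident) auto
    then show "(y1 has_real_derivative y2 t) (at t)"
      by (rule DERIV_cong) (simp add: y2_def algebra_simps)
  qed
  have Wy2: "W12_01 y2" unfolding W12_01_def
    using y2L acy2 pL AEy by (auto elim: AE_mp)
  have Wy1: "W12_01 y1" unfolding W12_01_def
    using y1L acy1 y2L AEy by (auto elim: AE_mp)
  have bc1: "y1 0 = s0" "y2 0 = v0" using assms(5,6) by (simp_all add: y1_def y2_def)
  have bc2: "y1 1 = sf" by (simp add: y1_def c1_def c2_def field_simps)
  have bc3: "y2 1 = vf" by (simp add: y2_def c1_def c2_def field_simps)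
  note bc = bc1 bc2 bc3
  have pA: "p \<in> A" unfolding A_def admissible_def
    using pL Wy1 Wy2 AEy bc by blast
  have mp1: "integral\<^sup>L ?M p = vf - v0" and mp2: "integral\<^sup>L ?M (\<lambda>t. t * p t) = s0 + vf - sf"
    using moments[OF pA[unfolded A_def]] by auto
  have pint: "integrable ?M p" by (rule L2_integrable[OF pL])
  have ptint: "integrable ?M (\<lambda>t. t * p t)" by (rule L2_integrable_t[OF pL])
  have dint: "integrable ?M (\<lambda>t. (p t - um t)\<^sup>2)"
  proof -
    have "integrable ?M (\<lambda>t. (c1 * t + c2)\<^sup>2)" by (rule cont_integrable01) (intro continuous_intros)
    moreover have "(\<lambda>t. (c1 * t + c2)\<^sup>2) = (\<lambda>t. (p t - um t)\<^sup>2)" by (auto simp: p_def)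
    ultimately show ?thesis by simp
  qed
  have key: "integral\<^sup>L ?M (\<lambda>t. (u t - um t)\<^sup>2) = integral\<^sup>L ?M (\<lambda>t. (u t - p t)\<^sup>2) + integral\<^sup>L ?M (\<lambda>t. (p t - um t)\<^sup>2)
      \<and> integrable ?M (\<lambda>t. (u t - p t)\<^sup>2)" if uA: "u \<in> A" for u
  proof -
    have uL: "L2_01 u" using uA unfolding A_def admissible_def by blast
    have mu1: "integral\<^sup>L ?M u = vf - v0" and mu2: "integral\<^sup>L ?M (\<lambda>t. t * u t) = s0 + vf - sf"
      using moments[OF uA[unfolded A_def]] by auto
    define w where "w = (\<lambda>t. u t - p t)"
    have wL: "L2_01 w"
    proof -
      have "L2_01 (\<lambda>t. u t + (-1) * p t)" by (intro L2_add uL L2_scale pL)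
      moreover have "(\<lambda>t. u t + (-1) * p t) = w" by (auto simp: w_def)
      ultimately show ?thesis by simp
    qed
    have uint: "integrable ?M u" by (rule L2_integrable[OF uL])
    have utint: "integrable ?M (\<lambda>t. t * u t)" by (rule L2_integrable_t[OF uL])
    have w0: "integral\<^sup>L ?M w = 0"
      unfolding w_def using Bochner_Integration.integral_diff[OF uint pint] mu1 mp1 by simp
    have tw0: "integral\<^sup>L ?M (\<lambda>t. t * w t) = 0"
    proof -
      have "integral\<^sup>L ?M (\<lambda>t. t * u t - t * p t) = 0"
        using Bochner_Integration.integral_diff[OF utint ptint] mu2 mp2 by simp
      moreover have "(\<lambda>t. t * u t - t * p t) = (\<lambda>t. t * w t)" by (auto simp: w_def algebra_simps)
      ultimately show ?thesis by simp
    qed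
    have w2int: "integrable ?M (\<lambda>t. (w t)\<^sup>2)" using wL unfolding L2_01_def by simp
    have twint: "integrable ?M (\<lambda>t. t * w t)" by (rule L2_integrable_t[OF wL])
    have wint: "integrable ?M w" by (rule L2_integrable[OF wL])
    have i1: "integrable ?M (\<lambda>t. (w t)\<^sup>2 + 2 * c1 * (t * w t))"
      using w2int twint by simp
    have i2: "integrable ?M (\<lambda>t. 2 * c2 * w t + (p t - um t)\<^sup>2)"
      using wint dint by simp
    have eq: "(\<lambda>t. (u t - um t)\<^sup>2) = (\<lambda>t. ((w t)\<^sup>2 + 2 * c1 * (t * w t)) + (2 * c2 * w t + (p t - um t)\<^sup>2))"
      by (rule ext) (simp add: w_def p_def power2_eq_square algebra_simps)
    have "integral\<^sup>L ?M (\<lambda>t. (u t - um t)\<^sup>2)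
        = integral\<^sup>L ?M (\<lambda>t. (w t)\<^sup>2 + 2 * c1 * (t * w t)) + integral\<^sup>L ?M (\<lambda>t. 2 * c2 * w t + (p t - um t)\<^sup>2)"
      unfolding eq by (rule Bochner_Integration.integral_add[OF i1 i2])
    also have "integral\<^sup>L ?M (\<lambda>t. (w t)\<^sup>2 + 2 * c1 * (t * w t)) = integral\<^sup>L ?M (\<lambda>t. (w t)\<^sup>2) + 2 * c1 * integral\<^sup>L ?M (\<lambda>t. t * w t)"
      using w2int twint by simp
    also have "integral\<^sup>L ?M (\<lambda>t. 2 * c2 * w t + (p t - um t)\<^sup>2) = 2 * c2 * integral\<^sup>L ?M w + integral\<^sup>L ?M (\<lambda>t. (p t - um t)\<^sup>2)"
      using wint dint by simp
    finally have "integral\<^sup>L ?M (\<lambda>t. (u t - um t)\<^sup>2) = integral\<^sup>L ?M (\<lambda>t. (w t)\<^sup>2) + integral\<^sup>L ?M (\<lambda>t. (p t - um t)\<^sup>2)"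
      using w0 tw0 by simp
    then show ?thesis using w2int unfolding w_def by simp
  qed
  have main: "is_L2_projection A um p"
    unfolding is_L2_projection_def
  proof (intro conjI ballI impI)
    show "p \<in> A" by (rule pA)
  next
    fix u assume uA: "u \<in> A"
    have nn: "0 \<le> integral\<^sup>L ?M (\<lambda>t. (u t - p t)\<^sup>2)" by (rule integral_nonneg_AE) simp
    then show "1 / 2 * integral\<^sup>L ?M (\<lambda>t. (p t - um t)\<^sup>2) \<le> 1 / 2 * integral\<^sup>L ?M (\<lambda>t. (u t - um t)\<^sup>2)"
      using key[OF uA] by simp
  next
    fix u assume uA: "u \<in> A"
      and le: "1 / 2 * integral\<^sup>L ?M (\<lambda>t. (u t - um t)\<^sup>2) \<le> 1 / 2 * integral\<^sup>L ?M (\<lambda>t. (p t - um t)\<^sup>2)"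
    have nn: "0 \<le> integral\<^sup>L ?M (\<lambda>t. (u t - p t)\<^sup>2)" by (rule integral_nonneg_AE) simp
    have z: "integral\<^sup>L ?M (\<lambda>t. (u t - p t)\<^sup>2) = 0" using key[OF uA] le nn by simp
    have "AE t in ?M. (u t - p t)\<^sup>2 = 0"
      using integral_nonneg_eq_0_iff_AE[of ?M "\<lambda>t. (u t - p t)\<^sup>2"] key[OF uA] z by simp
    then show "AE t in ?M. u t = p t" by (rule AE_mp) (intro AE_I2, simp)
  qed
  show ?thesis unfolding Let_def using main unfolding A_def p_def c1_def c2_def .
qed

end
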